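(* Let $n\ge 6$, $1\le k\le n-1$, let $I,J$ be tightly $r$-interlacing $k$-subsets of $\{1,\dots,n\}$ with $I\setminus J=\{i_1,\dots,i_r\}$, $J\setminus I=\{j_1,\dots,j_r\}$, $1\le i_1<j_1<\dots<i_r<j_r\le n$, and let $b_1,\dots,b_{2r}\in\mathbb{C}[[t]]$ with $\sum_{l=1}^{2r}b_l=0$. Then the module $\mathbb{M}(I,J)$ is indecomposable if and only if there exist odd indices $p<q$ in $\{1,3,\dots,2r-1\}$ such that $t\nmid b_p+b_{p+1}$, $t\nmid b_q+b_{q+1}$, $t\nmid b_p+b_{p+1}+b_q+b_{q+1}$, and $t\mid b_i+b_{i+1}$ for every odd $i$ with $p<i<q$.
   Context: $\Gamma_n$ is the quiver with vertices $1,\dots,n$ on a cycle (vertex $0$ identified with $n$), arrows $x_i\colon i-1\to i$, $y_i\colon i\to i-1$. $B_{k,n}$ is its completed path algebra modulo the closure of the ideal generated by $xy=yx$ and $x^k=y^{n-k}$ at every vertex; its centre is $\mathbb{C}[[t]]$, $t=\sum_ix_iy_i$. $I,J$ are tightly $r$-interlacing if there are $\{i_1,i_3,\dots,i_{2r-1}\}\subset I\setminus J$, $\{i_2,\dots,i_{2r}\}\subset J\setminus I$ with $i_1<i_2<\dots<i_{2r}<i_1$ cyclically, no larger such subsets exist, and $|I\cap J|=k-r$. The $B_{k,n}$-module $\mathbb{M}(I,J)$ has $V_i=\mathbb{C}[[t]]^2$ at each vertex, with $x_{i_l}=\begin{pmatrix}t&b_{2l-1}\\0&1\end{pmatrix}$,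 $y_{i_l}=\begin{pmatrix}1&-b_{2l-1}\\0&t\end{pmatrix}$, $x_{j_l}=\begin{pmatrix}1&b_{2l}\\0&t\end{pmatrix}$, $y_{j_l}=\begin{pmatrix}t&-b_{2l}\\0&1\end{pmatrix}$ ($l=1,\dots,r$), $x_i=tE$, $y_i=E$ for $i\notin I\cup J$, and $x_i=E$, $y_i=tE$ for $i\in I\cap J$ ($E$ the $2\times2$ identity matrix). *)

theory Defs
  imports "HOL-Computational_Algebra.Formal_Power_Series" "HOL-Library.Product_Plus"
begin

text \<open>The coefficient ring C[[t]]: complex formal power series; t is fps_X.
  A 2x2 matrix over C[[t]] is a quadruple (a,b,c,d) standing for [[a,b],[c,d]],
  acting on column vectors (u,v) in C[[t]]^2.\<close>

type_synonym vec2 = "complex fps \<times> complex fps"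
type_synonym mat2 = "complex fps \<times> complex fps \<times> complex fps \<times> complex fps"

definition mapply :: "mat2 \<Rightarrow> vec2 \<Rightarrow> vec2" where
  "mapply M w = (case M of (a,b,c,d) \<Rightarrow> (case w of (u,v) \<Rightarrow> (a*u + b*v, c*u + d*v)))"

definition identity2 :: mat2 where "identity2 = (1,0,0,1)"
definition tE :: mat2 where "tE = (fps_X,0,0,fps_X)"

definition cprev :: "nat \<Rightarrow> nat \<Rightarrow> nat" where
  "cprev n i = (if i = 1 then n else i - 1)"

text \<open>A representation of Gamma_n with space C[[t]]^2 at every vertex:
  X i : V_(i-1) \<rightarrow> V_i is the matrix of x_i, Y i : V_i \<rightarrow> V_(i-1) the matrix of y_i.
  A subrepresentation (= B_{k,n}-submodule) is a family of C[[t]]-submodules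
  W i \<subseteq> V_i stable under all x_i and y_i.\<close>

definition fps_submodule :: "vec2 set \<Rightarrow> bool" where
  "fps_submodule W \<longleftrightarrow> (0::vec2) \<in> W \<and> (\<forall>v\<in>W. \<forall>w\<in>W. v + w \<in> W)
     \<and> (\<forall>c::complex fps. \<forall>(u,v)\<in>W. (c*u, c*v) \<in> W)"

definition subrep :: "nat \<Rightarrow> (nat \<Rightarrow> mat2) \<Rightarrow> (nat \<Rightarrow> mat2) \<Rightarrow> (nat \<Rightarrow> vec2 set) \<Rightarrow> bool" where
  "subrep n X Y W \<longleftrightarrow> (\<forall>i\<in>{1..n}. fps_submodule (W i)
      \<and> (\<forall>v\<in>W (cprev n i). mapply (X i) v \<in> W i)
      \<and> (\<forall>v\<in>W i. mapply (Y i) v \<in> W (cprev n i)))"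

definition decomposable_rep :: "nat \<Rightarrow> (nat \<Rightarrow> mat2) \<Rightarrow> (nat \<Rightarrow> mat2) \<Rightarrow> bool" where
  "decomposable_rep n X Y \<longleftrightarrow> (\<exists>W W'. subrep n X Y W \<and> subrep n X Y W'
      \<and> (\<forall>i\<in>{1..n}. W i \<inter> W' i = {0} \<and> (\<forall>v. \<exists>a\<in>W i. \<exists>c\<in>W' i. v = a + c))
      \<and> (\<exists>i\<in>{1..n}. W i \<noteq> {0}) \<and> (\<exists>i\<in>{1..n}. W' i \<noteq> {0}))"

text \<open>Indecomposable: nonzero (some vertex, each space C[[t]]^2 is nonzero) and not
  a direct sum of two nonzero submodules.\<close>
definition indecomposable_rep :: "nat \<Rightarrow> (nat \<Rightarrow> mat2) \<Rightarrow> (nat \<Rightarrow> mat2) \<Rightarrow> bool" where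
  "indecomposable_rep n X Y \<longleftrightarrow> n \<ge> 1 \<and> \<not> decomposable_rep n X Y"

text \<open>An r-interlacing witness is a list
  [i_1,...,i_{2r}] with odd positions in I-J, even positions in J-I, cyclically
  strictly increasing (some rotation is strictly increasing).\<close>
definition interlacing_witness :: "nat set \<Rightarrow> nat set \<Rightarrow> nat \<Rightarrow> nat list \<Rightarrow> bool" where
  "interlacing_witness I J r s \<longleftrightarrow> length s = 2*r
     \<and> (\<forall>l<r. s ! (2*l) \<in> I - J \<and> s ! (2*l+1) \<in> J - I)
     \<and> (\<exists>m. sorted_wrt (<) (rotate m s))"

definition tightly_interlacing :: "nat \<Rightarrow> nat set \<Rightarrow> nat set \<Rightarrow> nat \<Rightarrow> bool" where
  "tightly_interlacing k I J r \<longleftrightarrow> (\<exists>s. interlacing_witness I J r s)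
     \<and> (\<forall>m s. interlacing_witness I J m s \<longrightarrow> m \<le> r)
     \<and> card (I \<inter> J) = k - r"

text \<open>The matrices of M(I,J); ii l = i_l, jj l = j_l for l = 1..r.\<close>
definition MX :: "nat set \<Rightarrow> nat set \<Rightarrow> nat \<Rightarrow> (nat \<Rightarrow> nat) \<Rightarrow> (nat \<Rightarrow> nat)
                   \<Rightarrow> (nat \<Rightarrow> complex fps) \<Rightarrow> nat \<Rightarrow> mat2" where
  "MX I J r ii jj b i =
     (if \<exists>l\<in>{1..r}. ii l = i then
        (let l = (THE l. l \<in> {1..r} \<and> ii l = i) in (fps_X, b (2*l-1), 0, 1))
      else if \<exists>l\<in>{1..r}. jj l = i then
        (let l = (THE l. l \<in> {1..r} \<and> jj l = i) in (1, b (2*l), 0, fps_X))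
      else if i \<in> I \<inter> J then identity2
      else tE)"

definition MY :: "nat set \<Rightarrow> nat set \<Rightarrow> nat \<Rightarrow> (nat \<Rightarrow> nat) \<Rightarrow> (nat \<Rightarrow> nat)
                   \<Rightarrow> (nat \<Rightarrow> complex fps) \<Rightarrow> nat \<Rightarrow> mat2" where
  "MY I J r ii jj b i =
     (if \<exists>l\<in>{1..r}. ii l = i then
        (let l = (THE l. l \<in> {1..r} \<and> ii l = i) in (1, - b (2*l-1), 0, fps_X))
      else if \<exists>l\<in>{1..r}. jj l = i then
        (let l = (THE l. l \<in> {1..r} \<and> jj l = i) in (fps_X, - b (2*l), 0, 1))
      else if i \<in> I \<inter> J then tE
      else identity2)"

end

theory Submission
  imports Defs
begin

unbundle fps_syntax


definition sgf :: "(nat \<Rightarrow> nat) \<Rightarrow> (nat \<Rightarrow> nat) \<Rightarrow> nat \<Rightarrow> nat" where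
  "sgf ii jj u = (if odd u then ii ((u+1) div 2) else jj (u div 2))"

definition cntf :: "(nat \<Rightarrow> nat) \<Rightarrow> (nat \<Rightarrow> nat) \<Rightarrow> nat \<Rightarrow> nat \<Rightarrow> nat" where
  "cntf ii jj r i = card {u\<in>{1..2*r}. sgf ii jj u \<le> i}"

lemma mono_from_succ:
  fixes f :: "nat \<Rightarrow> nat"
  assumes "\<forall>u. a \<le> u \<and> Suc u \<le> c \<longrightarrow> f u < f (Suc u)"
  shows "a \<le> u \<Longrightarrow> u < u' \<Longrightarrow> u' \<le> c \<Longrightarrow> f u < f u'"
proof (induction u' arbitrary: u)
  case 0 then show ?case by simp
next
  case (Suc v)
  show ?case
  proof (cases "u = v")
    case True then show ?thesis using assms Suc.prems by auto
  next
    case False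
    then have "f u < f v" using Suc by auto
    also have "f v < f (Suc v)" using assms Suc.prems by auto
    finally show ?thesis .
  qed
qed

context
  fixes n r :: nat and ii jj :: "nat \<Rightarrow> nat"
  assumes A11: "\<forall>l\<in>{1..r}. 1 \<le> ii l \<and> ii l < jj l \<and> jj l \<le> n"
    and A12: "\<forall>l\<in>{1..<r}. jj l < ii (Suc l)"
begin

lemma sg_succ: "1 \<le> u \<Longrightarrow> Suc u \<le> 2*r \<Longrightarrow> sgf ii jj u < sgf ii jj (Suc u)"
proof (cases "odd u")
  case True
  assume "1 \<le> u" "Suc u \<le> 2*r"
  then have l: "(u+1) div 2 \<in> {1..r}" "Suc u div 2 = (u+1) div 2" using True by (auto elim!: oddE)
  have "sgf ii jj u = ii ((u+1) div 2)" using True by (simp add: sgf_def)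
  moreover have "sgf ii jj (Suc u) = jj ((u+1) div 2)" using True l(2) by (simp add: sgf_def)
  moreover have "ii ((u+1) div 2) < jj ((u+1) div 2)" using A11 l(1) by blast
  ultimately show ?thesis by simp
next
  case False
  assume "1 \<le> u" "Suc u \<le> 2*r"
  then have l: "u div 2 \<in> {1..<r}" "(Suc u + 1) div 2 = Suc (u div 2)" using False by auto
  have "sgf ii jj u = jj (u div 2)" using False by (simp add: sgf_def)
  moreover have "sgf ii jj (Suc u) = ii (Suc (u div 2))" using False l(2) by (simp add: sgf_def)
  moreover have "jj (u div 2) < ii (Suc (u div 2))" using A12 l(1) by blast
  ultimately show ?thesis by simp
qed

lemma sg_mono: "1 \<le> u \<Longrightarrow> u < u' \<Longrightarrow> u' \<le> 2*r \<Longrightarrow> sgf ii jj u < sgf ii jj u'"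
  by (rule mono_from_succ[where a=1 and c="2*r"]) (use sg_succ in auto)

lemma sg_le_iff: "u \<in> {1..2*r} \<Longrightarrow> v \<in> {1..2*r} \<Longrightarrow> sgf ii jj u \<le> sgf ii jj v \<longleftrightarrow> u \<le> v"
proof -
  assume a: "u \<in> {1..2*r}" "v \<in> {1..2*r}"
  show ?thesis
  proof (cases "u \<le> v")
    case True
    then show ?thesis using sg_mono[of u v] a by (cases "u = v") auto
  next
    case False
    then show ?thesis using sg_mono[of v u] a by auto
  qed
qed

lemma sg_inj: "u \<in> {1..2*r} \<Longrightarrow> v \<in> {1..2*r} \<Longrightarrow> sgf ii jj u = sgf ii jj v \<longleftrightarrow> u = v"
  by (metis le_antisym order_refl sg_le_iff)

lemma sg_range: "u \<in> {1..2*r} \<Longrightarrow> sgf ii jj u \<in> {1..n}"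
proof -
  assume u: "u \<in> {1..2*r}"
  show ?thesis
  proof (cases "odd u")
    case True
    then have "(u+1) div 2 \<in> {1..r}" using u by (auto elim!: oddE)
    then show ?thesis using True A11 by (fastforce simp: sgf_def)
  next
    case False
    then have "u div 2 \<in> {1..r}" using u by auto
    then show ?thesis using False A11 by (fastforce simp: sgf_def)
  qed
qed

lemma cnt0: "cntf ii jj r 0 = 0"
proof -
  have "{u\<in>{1..2*r}. sgf ii jj u \<le> 0} = {}" using sg_range by force
  then show ?thesis by (simp add: cntf_def)
qed

lemma sg_less_iff: "u \<in> {1..2*r} \<Longrightarrow> v \<in> {1..2*r} \<Longrightarrow> sgf ii jj u < sgf ii jj v \<longleftrightarrow> u < v"
proof -
  assume a: "u \<in> {1..2*r}" "v \<in> {1..2*r}"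
  have h: "sgf ii jj v \<le> sgf ii jj u \<longleftrightarrow> v \<le> u" using sg_le_iff[OF a(2) a(1)] .
  show ?thesis by (metis h not_le)
qed

lemma cntn: "cntf ii jj r n = 2*r"
proof -
  have "{u\<in>{1..2*r}. sgf ii jj u \<le> n} = {1..2*r}" using sg_range by auto
  then show ?thesis by (simp add: cntf_def)
qed

lemma cnt_sg: "v \<in> {1..2*r} \<Longrightarrow> cntf ii jj r (sgf ii jj v) = v"
proof -
  assume v: "v \<in> {1..2*r}"
  have "{u\<in>{1..2*r}. sgf ii jj u \<le> sgf ii jj v} = {1..v}" using v sg_le_iff by auto
  then show ?thesis by (simp add: cntf_def)
qed

lemma cnt_sg_pred: "v \<in> {1..2*r} \<Longrightarrow> cntf ii jj r (sgf ii jj v - 1) = v - 1"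
proof -
  assume v: "v \<in> {1..2*r}"
  have "sgf ii jj v \<ge> 1" using sg_range[OF v] by auto
  then have "{u\<in>{1..2*r}. sgf ii jj u \<le> sgf ii jj v - 1} = {u\<in>{1..2*r}. sgf ii jj u < sgf ii jj v}" by auto
  also have "\<dots> = {u\<in>{1..2*r}. u < v}" using v sg_less_iff by blast
  also have "\<dots> = {1..v-1}" using v by auto
  finally show ?thesis by (simp add: cntf_def)
qed

lemma cnt_nonspecial: "i \<notin> sgf ii jj ` {1..2*r} \<Longrightarrow> i \<ge> 1 \<Longrightarrow> cntf ii jj r i = cntf ii jj r (i - 1)"
proof -
  assume i: "i \<notin> sgf ii jj ` {1..2*r}" "i \<ge> 1"
  have ne: "\<forall>u\<in>{1..2*r}. sgf ii jj u \<noteq> i" using i(1) by blast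
  have "{u\<in>{1..2*r}. sgf ii jj u \<le> i} = {u\<in>{1..2*r}. sgf ii jj u \<le> i - 1}"
  proof -
    have "\<And>u. u \<in> {1..2*r} \<Longrightarrow> sgf ii jj u \<le> i \<longleftrightarrow> sgf ii jj u \<le> i - 1"
    proof -
      fix u assume "u \<in> {1..2*r}"
      then have "sgf ii jj u \<noteq> i" using ne by blast
      then show "sgf ii jj u \<le> i \<longleftrightarrow> sgf ii jj u \<le> i - 1" using i(2) by linarith
    qed
    then show ?thesis by blast
  qed
  then show ?thesis by (simp add: cntf_def)
qed


lemma sg_odd: "1 \<le> l \<Longrightarrow> sgf ii jj (2*l-1) = ii l"
proof -
  assume "1 \<le> l"
  then have "odd (2*l-1)" "(2*l-1+1) div 2 = l" by auto
  then show ?thesis by (simp add: sgf_def)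
qed

lemma sg_even: "sgf ii jj (2*l) = jj l"
  by (simp add: sgf_def)

lemma vertex_cases:
  fixes I J :: "nat set" and b :: "nat \<Rightarrow> complex fps"
  assumes i: "i \<in> {1..n}"
  shows "(i \<notin> sgf ii jj ` {1..2*r} \<and> cntf ii jj r i = cntf ii jj r (i-1)
          \<and> (\<exists>c d. c \<noteq> 0 \<and> MX I J r ii jj b i = (c,0,0,c) \<and> MY I J r ii jj b i = (d,0,0,d)))
       \<or> (\<exists>v\<in>{1..2*r}. i = sgf ii jj v \<and> cntf ii jj r i = v \<and> cntf ii jj r (i-1) = v - 1
          \<and> (odd v \<longrightarrow> MX I J r ii jj b i = (fps_X, b v, 0, 1) \<and> MY I J r ii jj b i = (1, - b v, 0, fps_X))
          \<and> (even v \<longrightarrow> MX I J r ii jj b i = (1, b v, 0, fps_X) \<and> MY I J r ii jj b i = (fps_X, - b v, 0, 1)))"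
proof (cases "i \<in> sgf ii jj ` {1..2*r}")
  case False
  have nii: "\<not> (\<exists>l\<in>{1..r}. ii l = i)"
  proof
    assume "\<exists>l\<in>{1..r}. ii l = i"
    then obtain l where l: "l \<in> {1..r}" "ii l = i" by blast
    then have "2*l-1 \<in> {1..2*r}" "sgf ii jj (2*l-1) = i" using sg_odd by auto
    then show False using False by blast
  qed
  have njj: "\<not> (\<exists>l\<in>{1..r}. jj l = i)"
  proof
    assume "\<exists>l\<in>{1..r}. jj l = i"
    then obtain l where l: "l \<in> {1..r}" "jj l = i" by blast
    then have "2*l \<in> {1..2*r}" "sgf ii jj (2*l) = i" using sg_even by auto
    then show False using False by blast
  qed
  have "\<exists>c d. c \<noteq> 0 \<and> MX I J r ii jj b i = (c,0,0,c) \<and> MY I J r ii jj b i = (d,0,0,d)"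
  proof (cases "i \<in> I \<inter> J")
    case True
    then show ?thesis using nii njj
      by (intro exI[of _ 1] exI[of _ fps_X]) (simp add: MX_def MY_def identity2_def tE_def)
  next
    case False
    then show ?thesis using nii njj
      by (intro exI[of _ fps_X] exI[of _ 1]) (simp add: MX_def MY_def identity2_def tE_def)
  qed
  then show ?thesis using False cnt_nonspecial i by auto
next
  case True
  then obtain v where v: "v \<in> {1..2*r}" "i = sgf ii jj v" by blast
  have cv: "cntf ii jj r i = v" "cntf ii jj r (i-1) = v - 1" using cnt_sg cnt_sg_pred v by auto
  have oddc: "MX I J r ii jj b i = (fps_X, b v, 0, 1) \<and> MY I J r ii jj b i = (1, - b v, 0, fps_X)" if ov: "odd v"
  proof -
    define l where "l = (v+1) div 2"
    have l: "l \<in> {1..r}" "v = 2*l-1" using v ov by (auto simp: l_def elim!: oddE)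
    have iil: "ii l = i" using v l sg_odd by auto
    have ex: "\<exists>l\<in>{1..r}. ii l = i" using l iil by blast
    have the: "(THE l'. l' \<in> {1..r} \<and> ii l' = i) = l"
    proof (rule the_equality)
      show "l \<in> {1..r} \<and> ii l = i" using l iil by auto
    next
      fix l' assume l': "l' \<in> {1..r} \<and> ii l' = i"
      then have "sgf ii jj (2*l'-1) = sgf ii jj (2*l-1)" using sg_odd l iil by auto
      moreover have "2*l'-1 \<in> {1..2*r}" "2*l-1 \<in> {1..2*r}" using l l' by auto
      ultimately have "2*l'-1 = 2*l-1" using sg_inj by blast
      then show "l' = l" using l l' by auto
    qed
    show ?thesis using ex the l by (simp add: MX_def MY_def Let_def)
  qed
  have evenc: "MX I J r ii jj b i = (1, b v, 0, fps_X) \<and> MY I J r ii jj b i = (fps_X, - b v, 0, 1)" if ev: "even v"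
  proof -
    define l where "l = v div 2"
    have l: "l \<in> {1..r}" "v = 2*l" using v ev by (auto simp: l_def)
    have jjl: "jj l = i" using v l sg_even by auto
    have nex: "\<not> (\<exists>l\<in>{1..r}. ii l = i)"
    proof
      assume "\<exists>l\<in>{1..r}. ii l = i"
      then obtain l' where l': "l' \<in> {1..r}" "ii l' = i" by blast
      then have "sgf ii jj (2*l'-1) = sgf ii jj (2*l)" using sg_odd sg_even jjl by auto
      moreover have "2*l'-1 \<in> {1..2*r}" "2*l \<in> {1..2*r}" using l l' by auto
      ultimately have e: "2*l'-1 = 2*l" using sg_inj by blast
      have "l' \<ge> 1" using l' by simp
      with e show False by presburger
    qed
    have ex: "\<exists>l\<in>{1..r}. jj l = i" using l jjl by blast
    have the: "(THE l'. l' \<in> {1..r} \<and> jj l' = i) = l"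
    proof (rule the_equality)
      show "l \<in> {1..r} \<and> jj l = i" using l jjl by auto
    next
      fix l' assume l': "l' \<in> {1..r} \<and> jj l' = i"
      then have "sgf ii jj (2*l') = sgf ii jj (2*l)" using sg_even jjl by auto
      moreover have "2*l' \<in> {1..2*r}" "2*l \<in> {1..2*r}" using l l' by auto
      ultimately have "2*l' = 2*l" using sg_inj by blast
      then show "l' = l" by auto
    qed
    show ?thesis using nex ex the l by (simp add: MX_def MY_def Let_def)
  qed
  show ?thesis using v cv oddc evenc by blast
qed

end


definition sm :: "complex fps \<Rightarrow> vec2 \<Rightarrow> vec2" where
  "sm c w = (c * fst w, c * snd w)"

lemma mapply_simp: "mapply (a,b,c,d) (u,v) = (a*u + b*v, c*u + d*v)"
  by (simp add: mapply_def)

lemma mapply_diff: "mapply M (x - y) = mapply M x - mapply M y"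
  by (cases M; cases x; cases y) (simp add: mapply_def algebra_simps)

lemma mapply_add: "mapply M (x + y) = mapply M x + mapply M y"
  by (cases M; cases x; cases y) (simp add: mapply_def algebra_simps)

lemma mapply_mdiff: "mapply (A - B) x = mapply A x - mapply B x"
  by (cases A; cases B; cases x) (simp add: mapply_def algebra_simps)

lemma mapply_id: "mapply (1,0,0,1) x = x"
  by (cases x) (simp add: mapply_def)

lemma mapply_zero: "mapply (0,0,0,0) x = 0"
  by (cases x) (simp add: mapply_def zero_prod_def)

lemma sub_zero: "fps_submodule A \<Longrightarrow> 0 \<in> A"
  by (simp add: fps_submodule_def)

lemma sub_add: "fps_submodule A \<Longrightarrow> x \<in> A \<Longrightarrow> y \<in> A \<Longrightarrow> x + y \<in> A"
  by (simp add: fps_submodule_def)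

lemma sub_sm: "fps_submodule A \<Longrightarrow> x \<in> A \<Longrightarrow> sm c x \<in> A"
  unfolding fps_submodule_def sm_def by (cases x) fastforce

lemma sub_diff: "fps_submodule A \<Longrightarrow> x \<in> A \<Longrightarrow> y \<in> A \<Longrightarrow> x - y \<in> A"
proof -
  assume A: "fps_submodule A" "x \<in> A" "y \<in> A"
  have "sm (-1) y \<in> A" using A sub_sm by blast
  moreover have "x - y = x + sm (-1) y" by (cases x; cases y) (simp add: sm_def)
  ultimately show ?thesis using A sub_add by metis
qed

lemma proj_vertex:
  assumes fA: "fps_submodule A" and fB: "fps_submodule B"
    and AB: "A \<inter> B = {0}" and sp: "\<forall>v. \<exists>a\<in>A. \<exists>c\<in>B. v = a + c"
  shows "\<exists>M::mat2. (\<forall>v. mapply M v \<in> A \<and> v - mapply M v \<in> B)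
            \<and> (\<forall>v a. a \<in> A \<longrightarrow> v - a \<in> B \<longrightarrow> mapply M v = a)"
proof -
  have uniq: "a = a'" if "a \<in> A" "v - a \<in> B" "a' \<in> A" "v - a' \<in> B" for v a a'
  proof -
    have "a - a' \<in> A" using that fA sub_diff by blast
    moreover have "(v - a') - (v - a) \<in> B" using that fB sub_diff by blast
    moreover have "(v - a') - (v - a) = a - a'" by simp
    ultimately have "a - a' \<in> A \<inter> B" by simp
    then show ?thesis using AB by simp
  qed
  have ex: "\<exists>a. a \<in> A \<and> v - a \<in> B" for v
  proof -
    obtain a c where "a \<in> A" "c \<in> B" "v = a + c" using sp by blast
    then show ?thesis by (intro exI[of _ a]) simp
  qed
  define P where "P v = (SOME a. a \<in> A \<and> v - a \<in> B)" for v
  have P: "P v \<in> A \<and> v - P v \<in> B" for v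
    unfolding P_def using someI_ex[OF ex] .
  define M :: mat2 where "M = (fst (P (1,0)), fst (P (0,1)), snd (P (1,0)), snd (P (0,1)))"
  have MP: "mapply M v = P v" for v
  proof -
    obtain u w where v: "v = (u,w)" by (cases v)
    have e: "mapply M v = sm u (P (1,0)) + sm w (P (0,1))"
      by (simp add: v M_def mapply_def sm_def algebra_simps)
    have "sm u (P (1,0)) + sm w (P (0,1)) \<in> A" using P fA sub_sm sub_add by blast
    moreover have "v - (sm u (P (1,0)) + sm w (P (0,1))) = sm u ((1,0) - P (1,0)) + sm w ((0,1) - P (0,1))"
      by (simp add: v sm_def algebra_simps)
    moreover have "sm u ((1,0) - P (1,0)) + sm w ((0,1) - P (0,1)) \<in> B" using P fB sub_sm sub_add by blast
    ultimately show ?thesis using uniq P e by metis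
  qed
  show ?thesis
    by (rule exI[of _ M]) (metis MP P uniq)
qed

lemma decomp_to_E:
  assumes n1: "n \<ge> 1"
    and sW: "subrep n X Y W" and sW': "subrep n X Y W'"
    and dec: "\<forall>i\<in>{1..n}. W i \<inter> W' i = {0} \<and> (\<forall>v. \<exists>a\<in>W i. \<exists>c\<in>W' i. v = a + c)"
    and nz: "\<exists>i\<in>{1..n}. W i \<noteq> {0}" and nz': "\<exists>i\<in>{1..n}. W' i \<noteq> {0}"
  shows "\<exists>E. (\<forall>i\<in>{1..n}. \<forall>w. mapply (E i) (mapply (E i) w) = mapply (E i) w)
     \<and> (\<forall>i\<in>{1..n}. \<forall>w. mapply (X i) (mapply (E (cprev n i)) w) = mapply (E i) (mapply (X i) w))
     \<and> (\<exists>i\<in>{1..n}. E i \<noteq> (0,0,0,0)) \<and> (\<exists>i\<in>{1..n}. E i \<noteq> (1,0,0,1))"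
proof -
  have "\<forall>i\<in>{1..n}. \<exists>M::mat2. (\<forall>v. mapply M v \<in> W i \<and> v - mapply M v \<in> W' i)
            \<and> (\<forall>v a. a \<in> W i \<longrightarrow> v - a \<in> W' i \<longrightarrow> mapply M v = a)"
    using proj_vertex sW sW' dec unfolding subrep_def by blast
  then obtain E where E: "\<And>i. i\<in>{1..n} \<Longrightarrow> (\<forall>v. mapply (E i) v \<in> W i \<and> v - mapply (E i) v \<in> W' i)
            \<and> (\<forall>v a. a \<in> W i \<longrightarrow> v - a \<in> W' i \<longrightarrow> mapply (E i) v = a)"
    by metis
  have fW: "fps_submodule (W i)" "fps_submodule (W' i)" if "i \<in> {1..n}" for i
    using sW sW' that unfolding subrep_def by auto
  have cp: "cprev n i \<in> {1..n}" if "i \<in> {1..n}" for i using that n1 by (auto simp: cprev_def)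
  have idem: "\<forall>i\<in>{1..n}. \<forall>w. mapply (E i) (mapply (E i) w) = mapply (E i) w"
  proof (intro ballI allI)
    fix i w assume i: "i \<in> {1..n}"
    have "mapply (E i) w \<in> W i" using E[OF i] by blast
    moreover have "mapply (E i) w - mapply (E i) w \<in> W' i" using fW(2)[OF i] sub_zero by simp
    ultimately show "mapply (E i) (mapply (E i) w) = mapply (E i) w" using E[OF i] by blast
  qed
  have comm: "\<forall>i\<in>{1..n}. \<forall>w. mapply (X i) (mapply (E (cprev n i)) w) = mapply (E i) (mapply (X i) w)"
  proof (intro ballI allI)
    fix i w assume i: "i \<in> {1..n}"
    let ?j = "cprev n i"
    have j: "?j \<in> {1..n}" using cp[OF i] .
    have "mapply (E ?j) w \<in> W ?j" using E[OF j] by blast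
    then have a: "mapply (X i) (mapply (E ?j) w) \<in> W i" using sW i unfolding subrep_def by blast
    have "w - mapply (E ?j) w \<in> W' ?j" using E[OF j] by blast
    then have "mapply (X i) (w - mapply (E ?j) w) \<in> W' i" using sW' i unfolding subrep_def by blast
    then have "mapply (X i) w - mapply (X i) (mapply (E ?j) w) \<in> W' i" by (simp add: mapply_diff)
    then show "mapply (X i) (mapply (E ?j) w) = mapply (E i) (mapply (X i) w)"
      using E[OF i] a by metis
  qed
  have n0: "\<exists>i\<in>{1..n}. E i \<noteq> (0,0,0,0)"
  proof -
    obtain i where i: "i \<in> {1..n}" "W i \<noteq> {0}" using nz by blast
    then obtain w where w: "w \<in> W i" "w \<noteq> 0" using fW(1)[OF i(1)] sub_zero by blast
    have "w - w \<in> W' i" using fW(2)[OF i(1)] sub_zero by simp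
    then have "mapply (E i) w = w" using E[OF i(1)] w by blast
    then have "E i \<noteq> (0,0,0,0)" using w mapply_zero by metis
    then show ?thesis using i by blast
  qed
  have n1': "\<exists>i\<in>{1..n}. E i \<noteq> (1,0,0,1)"
  proof -
    obtain i where i: "i \<in> {1..n}" "W' i \<noteq> {0}" using nz' by blast
    then obtain w where w: "w \<in> W' i" "w \<noteq> 0" using fW(2)[OF i(1)] sub_zero by blast
    have "w - 0 \<in> W' i" using w by simp
    then have "mapply (E i) w = 0" using E[OF i(1)] fW(1)[OF i(1)] sub_zero by blast
    then have "E i \<noteq> (1,0,0,1)" using w mapply_id by metis
    then show ?thesis using i by blast
  qed
  show ?thesis using idem comm n0 n1' by blast
qed



definition ps :: "(nat \<Rightarrow> complex fps) \<Rightarrow> nat \<Rightarrow> complex fps" where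
  "ps b m = sum b {1..m}"

lemma ps0[simp]: "ps b 0 = 0" by (simp add: ps_def)
lemma psSuc: "ps b (Suc m) = ps b m + b (Suc m)" by (simp add: ps_def)

lemma X_cancel: "fps_X * (a::complex fps) = fps_X * b \<Longrightarrow> a = b"
  by (simp add: mult_left_cancel)

lemma arrow_odd:
  assumes "\<forall>w. mapply (fps_X, \<beta>, 0, 1) (mapply (p,q,r,s) w) = mapply (p2,q2,r2,s2) (mapply (fps_X, \<beta>, 0, 1) w)"
  shows "r = fps_X * r2 \<and> p2 = p + \<beta>*r2 \<and> s2 = s - \<beta>*r2 \<and> q2 = fps_X*q + \<beta>*(s-p) - \<beta>^2*r2"
proof -
  note e1 = spec[OF assms, of "(1,0)"] and e2 = spec[OF assms, of "(0,1)"]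
  have 1: "fps_X * p + \<beta> * r = p2 * fps_X" "r = r2 * fps_X"
    using arg_cong[OF e1, of fst] arg_cong[OF e1, of snd] by (simp_all add: mapply_def)
  have 2: "fps_X * q + \<beta> * s = p2 * \<beta> + q2" "s = r2 * \<beta> + s2"
    using arg_cong[OF e2, of fst] arg_cong[OF e2, of snd] by (simp_all add: mapply_def)
  have "fps_X * (p + \<beta> * r2) = fps_X * p + \<beta> * r" using 1(2) by (simp add: algebra_simps)
  also have "\<dots> = fps_X * p2" using 1(1) by (simp add: mult.commute)
  finally have "fps_X * (p + \<beta> * r2) = fps_X * p2" .
  then have p2: "p2 = p + \<beta>*r2" using X_cancel by metis
  show ?thesis using 1 2 p2 by (simp add: algebra_simps power2_eq_square)
qed

lemma arrow_even:
  assumes "\<forall>w. mapply (1, \<beta>, 0, fps_X) (mapply (p,q,r,s) w) = mapply (p2,q2,r2,s2) (mapply (1, \<beta>, 0, fps_X) w)"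
  shows "r2 = fps_X * r \<and> p2 = p + \<beta>*r \<and> s2 = s - \<beta>*r \<and> fps_X * q2 = q + \<beta>*(s-p) - \<beta>^2*r"
proof -
  note e1 = spec[OF assms, of "(1,0)"] and e2 = spec[OF assms, of "(0,1)"]
  have 1: "p + \<beta> * r = p2" "fps_X * r = r2"
    using arg_cong[OF e1, of fst] arg_cong[OF e1, of snd] by (simp_all add: mapply_def)
  have 2: "q + \<beta> * s = p2 * \<beta> + q2 * fps_X" "fps_X * s = r2 * \<beta> + s2 * fps_X"
    using arg_cong[OF e2, of fst] arg_cong[OF e2, of snd] by (simp_all add: mapply_def)
  have "fps_X * s = fps_X * (r * \<beta> + s2)" using 1 2 by (simp add: algebra_simps)
  then have s2: "s2 = s - \<beta>*r" using X_cancel by (metis add_diff_cancel_left' mult.commute)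
  show ?thesis using 1(1)[symmetric] 1(2) 2 s2 by (simp add: algebra_simps power2_eq_square)
qed

lemma arrow_scalar:
  assumes "c \<noteq> 0" "\<forall>w. mapply (c, 0, 0, c) (mapply (p,q,r,s) w) = mapply (p2,q2,r2,s2) (mapply (c, 0, 0, c) w)"
  shows "(p2,q2,r2,s2) = (p,q,r,s)"
proof -
  have 1: "c * p = p2 * c" "c * r = r2 * c"
    using spec[OF assms(2), of "(1,0)"] by (simp_all add: mapply_def)
  have 2: "c * q = q2 * c" "c * s = s2 * c"
    using spec[OF assms(2), of "(0,1)"] by (simp_all add: mapply_def)
  show ?thesis using 1 2 assms(1) by (simp add: mult.commute)
qed

definition INV :: "(nat \<Rightarrow> complex fps) \<Rightarrow> nat \<Rightarrow> complex fps \<Rightarrow> complex fps \<Rightarrow> complex fps \<Rightarrow> complex fps \<Rightarrow> complex fps \<Rightarrow> mat2 \<Rightarrow> bool" where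
  "INV b m p q r s \<rho> Fi =
     ((m = 0 \<longrightarrow> Fi = (p,q,r,s)) \<and>
     (m \<noteq> 0 \<longrightarrow> r = fps_X * \<rho> \<and>
        (odd m \<longrightarrow> Fi = (p + ps b m*\<rho>, fps_X*q + ps b m*(s-p) - (ps b m)^2*\<rho>, \<rho>, s - ps b m*\<rho>)) \<and>
        (even m \<longrightarrow> (\<exists>Q. Fi = (p + ps b m*\<rho>, Q, fps_X*\<rho>, s - ps b m*\<rho>) \<and> fps_X*Q = fps_X*q + ps b m*(s-p) - (ps b m)^2*\<rho>))))"

lemma shift_X: "fps_shift 1 (fps_X * a) = (a::complex fps)"
  by (metis fps_shift_times_fps_X' mult.commute)

lemma invariant:
  fixes F X :: "nat \<Rightarrow> mat2" and cnt :: "nat \<Rightarrow> nat" and b :: "nat \<Rightarrow> complex fps"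
  assumes cnt0: "cnt 0 = 0"
    and steps: "\<forall>i\<in>{1..n}. (cnt i = cnt (i-1) \<and> (\<exists>c. c \<noteq> 0 \<and> X i = (c,0,0,c)))
        \<or> (cnt i = Suc (cnt (i-1)) \<and> odd (cnt i) \<and> X i = (fps_X, b (cnt i), 0, 1))
        \<or> (cnt i = Suc (cnt (i-1)) \<and> even (cnt i) \<and> X i = (1, b (cnt i), 0, fps_X))"
    and rel: "\<forall>i\<in>{1..n}. \<forall>w. mapply (X i) (mapply (F (i-1)) w) = mapply (F i) (mapply (X i) w)"
    and F0: "F 0 = (p,q,r,s)" and \<rho>: "\<rho> = fps_shift 1 r"
  shows "i \<le> n \<Longrightarrow> INV b (cnt i) p q r s \<rho> (F i)"
proof (induction i)
  case 0
  show ?case using cnt0 F0 by (simp add: INV_def)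
next
  case (Suc i)
  have i1: "Suc i \<in> {1..n}" using Suc.prems by auto
  have IH: "INV b (cnt i) p q r s \<rho> (F i)" using Suc by simp
  obtain p1 q1 r1 s1 where Fi: "F i = (p1,q1,r1,s1)" by (cases "F i") auto
  obtain p2 q2 r2 s2 where Fs: "F (Suc i) = (p2,q2,r2,s2)" by (cases "F (Suc i)") auto
  have "\<forall>w. mapply (X (Suc i)) (mapply (F i) w) = mapply (F (Suc i)) (mapply (X (Suc i)) w)"
    using rel i1 by (metis diff_Suc_1)
  then have R: "\<forall>w. mapply (X (Suc i)) (mapply (p1,q1,r1,s1) w) = mapply (p2,q2,r2,s2) (mapply (X (Suc i)) w)"
    using Fi Fs by simp
  define m where "m = cnt i"
  define S' where "S' = ps b m"
  define \<beta> where "\<beta> = b (Suc m)"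
  have SS: "ps b (Suc m) = S' + \<beta>" by (simp add: S'_def \<beta>_def psSuc)
  from steps i1 consider
      (sc) c where "cnt (Suc i) = m" "c \<noteq> 0" "X (Suc i) = (c,0,0,c)"
    | (od) "cnt (Suc i) = Suc m" "odd (cnt (Suc i))" "X (Suc i) = (fps_X, \<beta>, 0, 1)"
    | (ev) "cnt (Suc i) = Suc m" "even (cnt (Suc i))" "X (Suc i) = (1, \<beta>, 0, fps_X)"
    unfolding m_def \<beta>_def by (metis diff_Suc_1)
  then show ?case
  proof cases
    case sc
    then have "F (Suc i) = F i" using arrow_scalar[of c] R Fi Fs by simp
    then show ?thesis using IH sc by (simp add: m_def)
  next
    case od
    have A: "r1 = fps_X * r2" "p2 = p1 + \<beta>*r2" "s2 = s1 - \<beta>*r2" "q2 = fps_X*q1 + \<beta>*(s1-p1) - \<beta>^2*r2"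
      using arrow_odd[of \<beta> p1 q1 r1 s1 p2 q2 r2 s2] R od by simp_all
    have me: "even m" using od by simp
    have Sn: "ps b (cnt (Suc i)) = S' + \<beta>" using od SS by simp
    show ?thesis
    proof (cases "m = 0")
      case True
      then have "F i = (p,q,r,s)" using IH by (simp add: INV_def m_def)
      then have e: "p1 = p" "q1 = q" "r1 = r" "s1 = s" using Fi by auto
      have r2: "r2 = \<rho>" using A(1) e(3) \<rho> shift_X by simp
      have S0: "S' = 0" using True by (simp add: S'_def)
      have "F (Suc i) = (p + (S'+\<beta>)*\<rho>, fps_X*q + (S'+\<beta>)*(s-p) - (S'+\<beta>)^2*\<rho>, \<rho>, s - (S'+\<beta>)*\<rho>)"
        using Fs A e r2 S0 by (simp add: algebra_simps power2_eq_square)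
      moreover have "r = fps_X * \<rho>" using A(1) e(3) r2 by simp
      ultimately show ?thesis using od Sn unfolding INV_def by simp
    next
      case False
      then obtain Q where Q: "F i = (p + S'*\<rho>, Q, fps_X*\<rho>, s - S'*\<rho>)" "fps_X*Q = fps_X*q + S'*(s-p) - S'^2*\<rho>" and rX: "r = fps_X * \<rho>"
        using IH me unfolding INV_def m_def S'_def by auto
      then have e: "p1 = p + S'*\<rho>" "q1 = Q" "r1 = fps_X*\<rho>" "s1 = s - S'*\<rho>" using Fi by auto
      have r2: "r2 = \<rho>" using A(1) e(3) X_cancel by metis
      have q2: "q2 = fps_X*q + (S' + \<beta>)*(s-p) - (S' + \<beta>)^2*\<rho>"
        using A(4) e r2 Q(2) by (simp add: algebra_simps power2_eq_square)
      have "F (Suc i) = (p + (S'+\<beta>)*\<rho>, fps_X*q + (S'+\<beta>)*(s-p) - (S'+\<beta>)^2*\<rho>, \<rho>, s - (S'+\<beta>)*\<rho>)"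
        using Fs A(2,3) e r2 q2 by (simp add: algebra_simps)
      then show ?thesis using od Sn rX unfolding INV_def by simp
    qed
  next
    case ev
    have A: "r2 = fps_X * r1" "p2 = p1 + \<beta>*r1" "s2 = s1 - \<beta>*r1" "fps_X * q2 = q1 + \<beta>*(s1-p1) - \<beta>^2*r1"
      using arrow_even[of \<beta> p1 q1 r1 s1 p2 q2 r2 s2] R ev by simp_all
    have mo: "odd m" "m \<noteq> 0" using ev by (auto elim: oddE)
    then have Fi': "F i = (p + S'*\<rho>, fps_X*q + S'*(s-p) - S'^2*\<rho>, \<rho>, s - S'*\<rho>)" and rX: "r = fps_X * \<rho>"
      using IH unfolding INV_def m_def S'_def by auto
    then have e: "p1 = p + S'*\<rho>" "q1 = fps_X*q + S'*(s-p) - S'^2*\<rho>" "r1 = \<rho>" "s1 = s - S'*\<rho>" using Fi by auto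
    have Sn: "ps b (cnt (Suc i)) = S' + \<beta>" using ev SS by simp
    have q2: "fps_X * q2 = fps_X*q + (S' + \<beta>)*(s-p) - (S' + \<beta>)^2*\<rho>"
      using A(4) e by (simp add: algebra_simps power2_eq_square)
    have "F (Suc i) = (p + (S' + \<beta>)*\<rho>, q2, fps_X*\<rho>, s - (S' + \<beta>)*\<rho>)"
      using A(1,2,3) e Fs by (simp add: algebra_simps)
    then show ?thesis using Sn ev q2 rX unfolding INV_def by auto
  qed
qed



lemma X_nth0[simp]: "(fps_X * (f::complex fps)) $ 0 = 0" by simp

lemma inv_constraint:
  assumes "INV b m p q r s \<rho> Fi" "even m" "m \<noteq> 0"
  shows "(ps b m $ 0) * ((s $ 0 - p $ 0) - ps b m $ 0 * \<rho> $ 0) = 0"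
proof -
  obtain Q where Q: "fps_X*Q = fps_X*q + ps b m*(s-p) - (ps b m)^2*\<rho>"
    using assms unfolding INV_def by auto
  then have "ps b m*(s-p) - (ps b m)^2*\<rho> = fps_X * (Q - q)" by (simp add: algebra_simps)
  then have "(ps b m*(s-p) - (ps b m)^2*\<rho>) $ 0 = 0" by simp
  then show ?thesis by (simp add: power2_eq_square algebra_simps)
qed

lemma inv_r:
  assumes "INV b m p q r s \<rho> Fi" "m \<noteq> 0"
  shows "r = fps_X * \<rho>"
  using assms unfolding INV_def by auto

lemma inv_zero:
  assumes "INV b m 0 0 0 0 0 Fi"
  shows "Fi = (0,0,0,0)"
proof (cases "m = 0")
  case True then show ?thesis using assms unfolding INV_def by auto
next
  case False
  show ?thesis
  proof (cases "odd m")
    case True then show ?thesis using assms False unfolding INV_def by auto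
  next
    case ev: False
    then obtain Q where "Fi = (0, Q, 0, 0)" "fps_X * Q = 0" using assms False unfolding INV_def by auto
    then show ?thesis by simp
  qed
qed

lemma coeff_prod0:
  assumes "\<forall>k<N. f $ k = 0" "g $ 0 = 0"
  shows "(f * g) $ N = (0::complex)"
proof -
  have "(f * g) $ N = (\<Sum>i=0..N. f$i * g$(N - i))" by (rule fps_mult_nth)
  also have "\<dots> = 0"
  proof (rule sum.neutral, intro ballI)
    fix i assume i: "i \<in> {0..N}"
    show "f$i * g$(N - i) = 0"
    proof (cases "i < N")
      case True then show ?thesis using assms by simp
    next
      case False then have "N - i = 0" using i by auto
      then show ?thesis using assms by simp
    qed
  qed
  finally show ?thesis .
qed

lemma idem_zero:
  assumes idem: "\<forall>w. mapply (p,q,r,s) (mapply (p,q,r,s) w) = mapply (p,q,r,s) w"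
    and z: "p $ 0 = 0" "q $ 0 = 0" "r $ 0 = 0" "s $ 0 = 0"
  shows "(p,q,r,s) = (0,0,0,0)"
proof -
  note e1 = spec[OF idem, of "(1,0)"] and e2 = spec[OF idem, of "(0,1)"]
  have E: "p = p*p + q*r" "r = r*p + s*r" "q = p*q + q*s" "s = r*q + s*s"
    using arg_cong[OF e1, of fst] arg_cong[OF e1, of snd] arg_cong[OF e2, of fst] arg_cong[OF e2, of snd]
    by (simp_all add: mapply_def)
  have "p $ N = 0 \<and> q $ N = 0 \<and> r $ N = 0 \<and> s $ N = 0" for N
  proof (induction N rule: less_induct)
    case (less N)
    then have h: "\<forall>k<N. p $ k = 0" "\<forall>k<N. q $ k = 0" "\<forall>k<N. r $ k = 0" "\<forall>k<N. s $ k = 0" by auto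
    have "p $ N = (p*p) $ N + (q*r) $ N" using E(1) by (metis fps_add_nth)
    then have 1: "p $ N = 0" using coeff_prod0 h z by simp
    have "r $ N = (r*p) $ N + (s*r) $ N" using E(2) by (metis fps_add_nth)
    then have 2: "r $ N = 0" using coeff_prod0 h z by simp
    have "q $ N = (p*q) $ N + (q*s) $ N" using E(3) by (metis fps_add_nth)
    then have 3: "q $ N = 0" using coeff_prod0 h z by simp
    have "s $ N = (r*q) $ N + (s*s) $ N" using E(4) by (metis fps_add_nth)
    then have 4: "s $ N = 0" using coeff_prod0 h z by simp
    show ?case using 1 2 3 4 by simp
  qed
  then have "p = 0" "q = 0" "r = 0" "s = 0" by (auto intro: fps_ext)
  then show ?thesis by simp
qed



locale chainloc =
  fixes n :: nat and cnt :: "nat \<Rightarrow> nat" and X :: "nat \<Rightarrow> mat2" and b :: "nat \<Rightarrow> complex fps"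
  assumes cnt0: "cnt 0 = 0"
    and steps: "\<forall>i\<in>{1..n}. (cnt i = cnt (i-1) \<and> (\<exists>c. c \<noteq> 0 \<and> X i = (c,0,0,c)))
        \<or> (cnt i = Suc (cnt (i-1)) \<and> odd (cnt i) \<and> X i = (fps_X, b (cnt i), 0, 1))
        \<or> (cnt i = Suc (cnt (i-1)) \<and> even (cnt i) \<and> X i = (1, b (cnt i), 0, fps_X))"
begin

lemma zero_prop:
  assumes rel: "\<forall>i\<in>{1..n}. \<forall>w. mapply (X i) (mapply (F (i-1)) w) = mapply (F i) (mapply (X i) w)"
    and F0: "F 0 = (0,0,0,0)"
  shows "i \<le> n \<Longrightarrow> F i = (0,0,0,0)"
proof -
  assume i: "i \<le> n"
  have "INV b (cnt i) 0 0 0 0 (fps_shift 1 0) (F i)"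
    by (rule invariant[OF cnt0 steps rel F0 refl i])
  then show ?thesis using inv_zero by simp
qed

lemma core:
  assumes rel: "\<forall>i\<in>{1..n}. \<forall>w. mapply (X i) (mapply (F (i-1)) w) = mapply (F i) (mapply (X i) w)"
    and idem0: "\<forall>w. mapply (F 0) (mapply (F 0) w) = mapply (F 0) w"
    and i12: "i1 \<le> n" "i2 \<le> n" "even (cnt i1)" "cnt i1 \<noteq> 0" "even (cnt i2)" "cnt i2 \<noteq> 0"
    and x: "ps b (cnt i1) $ 0 \<noteq> 0" "ps b (cnt i2) $ 0 \<noteq> 0" "ps b (cnt i1) $ 0 \<noteq> ps b (cnt i2) $ 0"
  shows "(\<forall>i\<le>n. F i = (0,0,0,0)) \<or> (\<forall>i\<le>n. F i = (1,0,0,1))"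
proof -
  obtain p q r s where F0: "F 0 = (p,q,r,s)" by (cases "F 0") auto
  define \<rho> where "\<rho> = fps_shift 1 r"
  have I1: "INV b (cnt i1) p q r s \<rho> (F i1)" by (rule invariant[OF cnt0 steps rel F0 \<rho>_def i12(1)])
  have I2: "INV b (cnt i2) p q r s \<rho> (F i2)" by (rule invariant[OF cnt0 steps rel F0 \<rho>_def i12(2)])
  have r: "r = fps_X * \<rho>" using inv_r[OF I1 i12(4)] .
  define x1 where "x1 = ps b (cnt i1) $ 0"
  define x2 where "x2 = ps b (cnt i2) $ 0"
  have c1: "x1 * ((s $ 0 - p $ 0) - x1 * \<rho> $ 0) = 0" using inv_constraint[OF I1 i12(3,4)] x1_def by simp
  have c2: "x2 * ((s $ 0 - p $ 0) - x2 * \<rho> $ 0) = 0" using inv_constraint[OF I2 i12(5,6)] x2_def by simp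
  have d1: "s $ 0 - p $ 0 = x1 * \<rho> $ 0" using c1 x(1) x1_def by simp
  have d2: "s $ 0 - p $ 0 = x2 * \<rho> $ 0" using c2 x(2) x2_def by simp
  have "(x1 - x2) * \<rho> $ 0 = 0" using d1 d2 by (simp add: left_diff_distrib) (metis eq_commute)
  then have "\<rho> $ 0 = 0" using x(3) x1_def x2_def by simp
  then have s0: "s $ 0 = p $ 0" using d1 by simp
  have r0: "r $ 0 = 0" using r by simp
  note e1 = spec[OF idem0, of "(1,0)"] and e2 = spec[OF idem0, of "(0,1)"]
  have Eq: "p = p*p + q*r" "q = p*q + q*s"
    using arg_cong[OF e1, of fst] arg_cong[OF e2, of fst] F0 by (simp_all add: mapply_def)
  have p0: "p $ 0 = p $ 0 * p $ 0" using arg_cong[OF Eq(1), of "\<lambda>f. f $ 0"] r0 by simp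
  have q0: "q $ 0 = 2 * p $ 0 * q $ 0" using arg_cong[OF Eq(2), of "\<lambda>f. f $ 0"] s0 by (simp add: algebra_simps)
  have "p $ 0 = 0 \<or> p $ 0 = 1" using p0 by (metis mult_cancel_left1 mult.commute)
  then show ?thesis
  proof
    assume pz: "p $ 0 = 0"
    then have "q $ 0 = 0" using q0 by simp
    then have "(p,q,r,s) = (0,0,0,0)" using idem_zero idem0 F0 pz s0 r0 by metis
    then have "F 0 = (0,0,0,0)" using F0 by simp
    then show ?thesis using zero_prop[OF rel] by blast
  next
    assume po: "p $ 0 = 1"
    then have qz: "q $ 0 = 0" using q0 by simp
    define G where "G i = (1,0,0,1) - F i" for i
    have relG: "\<forall>i\<in>{1..n}. \<forall>w. mapply (X i) (mapply (G (i-1)) w) = mapply (G i) (mapply (X i) w)"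
      using rel by (simp add: G_def mapply_mdiff mapply_id mapply_diff)
    have "\<forall>w. mapply (G 0) (mapply (G 0) w) = mapply (G 0) w"
    proof
      fix w
      have "mapply (G 0) (mapply (G 0) w) = (w - mapply (F 0) w) - (mapply (F 0) w - mapply (F 0) (mapply (F 0) w))"
        by (simp add: G_def mapply_mdiff mapply_id mapply_diff)
      also have "\<dots> = w - mapply (F 0) w" using spec[OF idem0, of w] by simp
      also have "\<dots> = mapply (G 0) w" by (simp add: G_def mapply_mdiff mapply_id)
      finally show "mapply (G 0) (mapply (G 0) w) = mapply (G 0) w" .
    qed
    moreover have "G 0 = (1 - p, - q, - r, 1 - s)" using F0 by (simp add: G_def)
    ultimately have "(1 - p, - q, - r, 1 - s) = (0,0,0,0)"
      using idem_zero[of "1 - p" "-q" "-r" "1 - s"] po qz r0 s0 by simp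
    then have "G 0 = (0,0,0,0)" using F0 by (simp add: G_def zero_prod_def)
    then have "\<forall>i\<le>n. G i = (0,0,0,0)" using zero_prop[OF relG] by blast
    then have "\<forall>i\<le>n. F i = (1,0,0,1)" unfolding G_def by (metis diff_eq_eq add_0 prod.inject zero_prod_def) 
    then show ?thesis by blast
  qed
qed

end


definition genm :: "(nat \<Rightarrow> complex fps) \<Rightarrow> complex \<Rightarrow> nat \<Rightarrow> vec2" where
  "genm b a m = (let T = ps b m - fps_const a in
     if odd m then (T, 1) else if T $ 0 = 0 then (fps_shift 1 T, 1) else (T, fps_X))"

definition spn :: "vec2 \<Rightarrow> vec2 set" where "spn g = range (\<lambda>c. sm c g)"

lemma X_shift: "f $ 0 = 0 \<Longrightarrow> fps_X * fps_shift 1 f = (f::complex fps)"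
  by (rule fps_ext) (simp add: fps_X_mult_nth)

lemma spn_sub: "fps_submodule (spn g)"
  unfolding fps_submodule_def
proof (intro conjI ballI allI)
  have "sm 0 g = 0" by (simp add: sm_def zero_prod_def)
  then show "0 \<in> spn g" unfolding spn_def by (intro range_eqI[where x=0]) simp
next
  fix v w assume "v \<in> spn g" "w \<in> spn g"
  then obtain c d where vw: "v = sm c g" "w = sm d g" unfolding spn_def by blast
  have "sm c g + sm d g = sm (c + d) g" by (simp add: sm_def algebra_simps)
  then show "v + w \<in> spn g" unfolding spn_def vw by (intro range_eqI[where x="c+d"]) simp
next
  fix e :: "complex fps" and x assume "x \<in> spn g"
  then obtain c where x: "x = sm c g" unfolding spn_def by blast
  obtain g1 g2 where g: "g = (g1, g2)" by (cases g)
  have "(e * (c * g1), e * (c * g2)) \<in> spn g" unfolding spn_def g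
    by (intro range_eqI[where x="e*c"]) (simp add: sm_def mult.assoc)
  then show "case x of (u, v) \<Rightarrow> (e * u, e * v) \<in> spn g" using x g by (simp add: sm_def)
qed

lemma mapply_sm: "mapply M (sm c g) = sm c (mapply M g)"
  by (cases M; cases g) (simp add: mapply_def sm_def algebra_simps)

lemma sm_sm: "sm c (sm d g) = sm (c*d) g" by (simp add: sm_def)

lemma spn_stable: "\<exists>\<kappa>. mapply M g = sm \<kappa> h \<Longrightarrow> v \<in> spn g \<Longrightarrow> mapply M v \<in> spn h"
proof -
  assume k: "\<exists>\<kappa>. mapply M g = sm \<kappa> h" and v: "v \<in> spn g"
  obtain \<kappa> where k: "mapply M g = sm \<kappa> h" using k by blast
  obtain c where "v = sm c g" using v unfolding spn_def by blast
  then have "mapply M v = sm (c*\<kappa>) h" using k by (simp add: mapply_sm sm_sm)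
  then show ?thesis unfolding spn_def by (intro range_eqI[where x="c*\<kappa>"]) simp
qed

lemma spn_compl:
  assumes d: "(fst g * snd h - snd g * fst h) $ 0 \<noteq> 0"
  shows "spn g \<inter> spn h = {0}" "\<forall>v. \<exists>a\<in>spn g. \<exists>c\<in>spn h. v = a + c"
proof -
  obtain g1 g2 h1 h2 where gh: "g = (g1,g2)" "h = (h1,h2)" by (cases g; cases h) auto
  define D where "D = g1 * h2 - g2 * h1"
  have "D $ 0 \<noteq> 0" using d gh D_def by simp
  then have D0: "D \<noteq> 0" by auto
  show "spn g \<inter> spn h = {0}"
  proof
    show "spn g \<inter> spn h \<subseteq> {0}"
    proof
      fix v assume vv: "v \<in> spn g \<inter> spn h"
      obtain c where v1: "v = sm c g" using vv unfolding spn_def by blast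
      obtain e where v2: "v = sm e h" using vv unfolding spn_def by blast
      note v = v1 v2
      then have "c * g1 = e * h1" "c * g2 = e * h2" using gh by (auto simp: sm_def)
      then have "c * D = 0"
      proof -
        assume eq: "c * g1 = e * h1" "c * g2 = e * h2"
        have "c * D = (c*g1)*h2 - (c*g2)*h1" by (simp add: D_def right_diff_distrib mult.assoc)
        also have "\<dots> = (e*h1)*h2 - (e*h2)*h1" using eq by simp
        also have "\<dots> = 0" by (simp add: mult.assoc mult.left_commute[of h1 e h2] mult.commute[of h1 h2])
        finally show ?thesis .
      qed
      then have "c = 0" using D0 by simp
      then show "v \<in> {0}" using v by (simp add: sm_def zero_prod_def)
    qed
  next
    show "{0} \<subseteq> spn g \<inter> spn h" unfolding spn_def
      by (auto intro!: image_eqI[of _ _ 0] simp: sm_def zero_prod_def)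
  qed
  show "\<forall>v. \<exists>a\<in>spn g. \<exists>c\<in>spn h. v = a + c"
  proof
    fix v :: vec2
    obtain v1 v2 where v: "v = (v1, v2)" by (cases v)
    define iD where "iD = inverse D"
    have iDD: "iD * D = 1" using d gh D_def iD_def by (simp add: inverse_mult_eq_1)
    define c where "c = (v1 * h2 - v2 * h1) * iD"
    define e where "e = (g1 * v2 - g2 * v1) * iD"
    have "sm c g + sm e h = (iD * (v1 * D), iD * (v2 * D))"
      using gh unfolding sm_def c_def e_def D_def by (simp add: algebra_simps)
    also have "\<dots> = v" using iDD v by (simp add: mult.left_commute mult.commute[of iD])
    moreover have "sm c g \<in> spn g" "sm e h \<in> spn h" unfolding spn_def by auto
    ultimately show "\<exists>a\<in>spn g. \<exists>c\<in>spn h. v = a + c" by metis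
  qed
qed

lemma odd_arrow_gen:
  assumes "even m"
  shows "\<exists>\<kappa>. mapply (fps_X, b (Suc m), 0, 1) (genm b a m) = sm \<kappa> (genm b a (Suc m))"
    and "\<exists>\<kappa>. mapply (1, - b (Suc m), 0, fps_X) (genm b a (Suc m)) = sm \<kappa> (genm b a m)"
proof -
  define T where "T = ps b m - fps_const a"
  have T': "ps b (Suc m) - fps_const a = T + b (Suc m)" by (simp add: T_def psSuc algebra_simps)
  have gs: "genm b a (Suc m) = (T + b (Suc m), 1)" using assms T' by (simp add: genm_def Let_def)
  show "\<exists>\<kappa>. mapply (fps_X, b (Suc m), 0, 1) (genm b a m) = sm \<kappa> (genm b a (Suc m))"
  proof (cases "T $ 0 = 0")
    case True
    then have "genm b a m = (fps_shift 1 T, 1)" using assms by (simp add: genm_def Let_def T_def)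
    then show ?thesis using gs True X_shift[OF True]
      by (intro exI[of _ 1]) (simp add: mapply_def sm_def)
  next
    case False
    then have "genm b a m = (T, fps_X)" using assms by (simp add: genm_def Let_def T_def)
    then show ?thesis using gs by (intro exI[of _ fps_X]) (simp add: mapply_def sm_def algebra_simps)
  qed
  show "\<exists>\<kappa>. mapply (1, - b (Suc m), 0, fps_X) (genm b a (Suc m)) = sm \<kappa> (genm b a m)"
  proof (cases "T $ 0 = 0")
    case True
    then have "genm b a m = (fps_shift 1 T, 1)" using assms by (simp add: genm_def Let_def T_def)
    then show ?thesis using gs True X_shift[OF True]
      by (intro exI[of _ fps_X]) (simp add: mapply_def sm_def)
  next
    case False
    then have "genm b a m = (T, fps_X)" using assms by (simp add: genm_def Let_def T_def)
    then show ?thesis using gs by (intro exI[of _ 1]) (simp add: mapply_def sm_def)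
  qed
qed

lemma even_arrow_gen:
  assumes "odd m"
  shows "\<exists>\<kappa>. mapply (1, b (Suc m), 0, fps_X) (genm b a m) = sm \<kappa> (genm b a (Suc m))"
    and "\<exists>\<kappa>. mapply (fps_X, - b (Suc m), 0, 1) (genm b a (Suc m)) = sm \<kappa> (genm b a m)"
proof -
  define T where "T = ps b m - fps_const a"
  define T' where "T' = ps b (Suc m) - fps_const a"
  have T': "T' = T + b (Suc m)" by (simp add: T_def T'_def psSuc algebra_simps)
  have gm: "genm b a m = (T, 1)" using assms by (simp add: genm_def Let_def T_def)
  have ev: "even (Suc m)" using assms by simp
  show "\<exists>\<kappa>. mapply (1, b (Suc m), 0, fps_X) (genm b a m) = sm \<kappa> (genm b a (Suc m))"
  proof (cases "T' $ 0 = 0")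
    case True
    then have "genm b a (Suc m) = (fps_shift 1 T', 1)" using ev by (simp add: genm_def Let_def T'_def)
    then show ?thesis using gm T' X_shift[OF True]
      by (intro exI[of _ fps_X]) (simp add: mapply_def sm_def)
  next
    case False
    then have "genm b a (Suc m) = (T', fps_X)" using ev by (simp add: genm_def Let_def T'_def)
    then show ?thesis using gm T' by (intro exI[of _ 1]) (simp add: mapply_def sm_def)
  qed
  show "\<exists>\<kappa>. mapply (fps_X, - b (Suc m), 0, 1) (genm b a (Suc m)) = sm \<kappa> (genm b a m)"
  proof (cases "T' $ 0 = 0")
    case True
    then have "genm b a (Suc m) = (fps_shift 1 T', 1)" using ev by (simp add: genm_def Let_def T'_def)
    then show ?thesis using gm T' X_shift[OF True]
      by (intro exI[of _ 1]) (simp add: mapply_def sm_def)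
  next
    case False
    then have "genm b a (Suc m) = (T', fps_X)" using ev by (simp add: genm_def Let_def T'_def)
    then show ?thesis using gm T' by (intro exI[of _ fps_X]) (simp add: mapply_def sm_def algebra_simps)
  qed
qed

lemma gen_det:
  assumes b0: "\<beta>0 \<noteq> 0" and c: "even m \<longrightarrow> ps b m $ 0 \<in> {0, \<beta>0}"
  shows "(fst (genm b 0 m) * snd (genm b \<beta>0 m) - snd (genm b 0 m) * fst (genm b \<beta>0 m)) $ 0 \<noteq> 0"
proof -
  define P where "P = ps b m"
  have "fst (genm b 0 m) * snd (genm b \<beta>0 m) - snd (genm b 0 m) * fst (genm b \<beta>0 m) = fps_const \<beta>0"
  proof (cases "odd m")
    case True then show ?thesis by (simp add: genm_def Let_def P_def[symmetric])
  next
    case False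
    then have Pv: "P $ 0 = 0 \<or> P $ 0 = \<beta>0" using c P_def by auto
    then show ?thesis
    proof
      assume P0: "P $ 0 = 0"
      have "fps_X * fps_shift 1 P = P" using X_shift[OF P0] .
      then show ?thesis using False P0 b0 by (simp add: genm_def Let_def P_def[symmetric] algebra_simps)
    next
      assume P0: "P $ 0 = \<beta>0"
      have "(P - fps_const \<beta>0) $ 0 = 0" using P0 by simp
      then have "fps_X * fps_shift 1 (P - fps_const \<beta>0) = P - fps_const \<beta>0" using X_shift by blast
      then show ?thesis using False P0 b0 by (simp add: genm_def Let_def P_def[symmetric] algebra_simps)
    qed
  qed
  then show ?thesis using b0 by simp
qed



lemma genm_snd: "snd (genm b a m) \<noteq> 0"
  by (simp add: genm_def Let_def)

lemma genm_in: "genm b a m \<in> spn (genm b a m)"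
  unfolding spn_def by (intro range_eqI[where x=1]) (simp add: sm_def)

lemma genm_nz: "spn (genm b a m) \<noteq> {0}"
proof
  assume "spn (genm b a m) = {0}"
  then have "genm b a m = 0" using genm_in by blast
  then show False using genm_snd[of b a m] by simp
qed

lemma scalar_gen: "\<exists>\<kappa>. mapply (c,0,0,c) g = sm \<kappa> g"
  by (cases g) (auto simp: mapply_def sm_def)

lemma decomp_construct:
  fixes X Y :: "nat \<Rightarrow> mat2" and cnt :: "nat \<Rightarrow> nat" and b :: "nat \<Rightarrow> complex fps"
  assumes n1: "n \<ge> 1"
    and steps2: "\<forall>i\<in>{1..n}. (cnt i = cnt (i-1) \<and> (\<exists>c d. X i = (c,0,0,c) \<and> Y i = (d,0,0,d)))
        \<or> (cnt i = Suc (cnt (i-1)) \<and> odd (cnt i) \<and> X i = (fps_X, b (cnt i), 0, 1) \<and> Y i = (1, - b (cnt i), 0, fps_X))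
        \<or> (cnt i = Suc (cnt (i-1)) \<and> even (cnt i) \<and> X i = (1, b (cnt i), 0, fps_X) \<and> Y i = (fps_X, - b (cnt i), 0, 1))"
    and cnt0: "cnt 0 = 0" and cntn: "even (cnt n)" and psn: "ps b (cnt n) = 0"
    and b0: "\<beta>0 \<noteq> 0" and vals: "\<forall>i\<in>{1..n}. even (cnt i) \<longrightarrow> ps b (cnt i) $ 0 \<in> {0, \<beta>0}"
  shows "decomposable_rep n X Y"
proof -
  have cp: "genm b a (cnt (cprev n i)) = genm b a (cnt (i-1))" if i: "i \<in> {1..n}" for a i
  proof (cases "i = 1")
    case True
    then show ?thesis using cntn psn cnt0 by (simp add: cprev_def genm_def)
  next
    case False then show ?thesis by (simp add: cprev_def)
  qed
  have stab: "(\<forall>v\<in>spn (genm b a (cnt (cprev n i))). mapply (X i) v \<in> spn (genm b a (cnt i)))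
      \<and> (\<forall>v\<in>spn (genm b a (cnt i)). mapply (Y i) v \<in> spn (genm b a (cnt (cprev n i))))"
    if i: "i \<in> {1..n}" for a i
  proof -
    have "(\<exists>\<kappa>. mapply (X i) (genm b a (cnt (i-1))) = sm \<kappa> (genm b a (cnt i)))
        \<and> (\<exists>\<kappa>. mapply (Y i) (genm b a (cnt i)) = sm \<kappa> (genm b a (cnt (i-1))))"
    proof -
      from steps2 i consider
          (sc) c d where "cnt i = cnt (i-1)" "X i = (c,0,0,c)" "Y i = (d,0,0,d)"
        | (od) "cnt i = Suc (cnt (i-1))" "odd (cnt i)" "X i = (fps_X, b (cnt i), 0, 1)" "Y i = (1, - b (cnt i), 0, fps_X)"
        | (ev) "cnt i = Suc (cnt (i-1))" "even (cnt i)" "X i = (1, b (cnt i), 0, fps_X)" "Y i = (fps_X, - b (cnt i), 0, 1)"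
        by blast
      then show ?thesis
      proof cases
        case sc then show ?thesis using scalar_gen by simp
      next
        case od
        then have "even (cnt (i-1))" by simp
        then show ?thesis using odd_arrow_gen[of "cnt (i-1)" b a] od by simp
      next
        case ev
        then have "odd (cnt (i-1))" by simp
        then show ?thesis using even_arrow_gen[of "cnt (i-1)" b a] ev by simp
      qed
    qed
    then show ?thesis using spn_stable cp[OF i] by metis
  qed
  define W where "W i = spn (genm b 0 (cnt i))" for i
  define W' where "W' i = spn (genm b \<beta>0 (cnt i))" for i
  have sW: "subrep n X Y W" unfolding subrep_def W_def using stab spn_sub by blast
  have sW': "subrep n X Y W'" unfolding subrep_def W'_def using stab spn_sub by blast
  have dec: "\<forall>i\<in>{1..n}. W i \<inter> W' i = {0} \<and> (\<forall>v. \<exists>a\<in>W i. \<exists>c\<in>W' i. v = a + c)"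
  proof
    fix i assume i: "i \<in> {1..n}"
    have "(fst (genm b 0 (cnt i)) * snd (genm b \<beta>0 (cnt i)) - snd (genm b 0 (cnt i)) * fst (genm b \<beta>0 (cnt i))) $ 0 \<noteq> 0"
      using gen_det b0 vals i by blast
    then show "W i \<inter> W' i = {0} \<and> (\<forall>v. \<exists>a\<in>W i. \<exists>c\<in>W' i. v = a + c)"
      unfolding W_def W'_def using spn_compl by blast
  qed
  have "1 \<in> {1..n}" using n1 by simp
  then have "\<exists>i\<in>{1..n}. W i \<noteq> {0}" "\<exists>i\<in>{1..n}. W' i \<noteq> {0}"
    unfolding W_def W'_def using genm_nz by blast+
  then show ?thesis unfolding decomposable_rep_def using sW sW' dec by blast
qed



definition cc :: "(nat \<Rightarrow> complex fps) \<Rightarrow> nat \<Rightarrow> complex" where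
  "cc b l = (b (2*l-1) + b (2*l)) $ 0"

definition PP :: "(nat \<Rightarrow> complex fps) \<Rightarrow> nat \<Rightarrow> complex" where
  "PP b j = ps b (2*j) $ 0"

lemma PP0: "PP b 0 = 0" by (simp add: PP_def)

lemma PPSuc: "PP b (Suc j) = PP b j + cc b (Suc j)"
proof -
  have "2 * Suc j = Suc (Suc (2*j))" by simp
  then have "ps b (2 * Suc j) = ps b (2*j) + b (Suc (2*j)) + b (Suc (Suc (2*j)))" by (simp add: psSuc)
  moreover have "2 * Suc j - 1 = Suc (2*j)" by simp
  ultimately show ?thesis by (simp add: PP_def cc_def add.assoc)
qed

definition COND :: "(nat \<Rightarrow> complex fps) \<Rightarrow> nat \<Rightarrow> bool" where
  "COND b r = (\<exists>l1 l2. 1 \<le> l1 \<and> l1 < l2 \<and> l2 \<le> r \<and> cc b l1 \<noteq> 0 \<and> cc b l2 \<noteq> 0 \<and> cc b l1 + cc b l2 \<noteq> 0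
      \<and> (\<forall>l. l1 < l \<and> l < l2 \<longrightarrow> cc b l = 0))"

lemma Xdvd: "fps_X dvd (f::complex fps) \<longleftrightarrow> f $ 0 = 0"
proof
  assume "fps_X dvd f" then obtain g where "f = fps_X * g" by (auto elim: dvdE)
  then show "f $ 0 = 0" by simp
next
  assume h: "f $ 0 = 0"
  have "f = fps_X * fps_shift 1 f" using X_shift[OF h] by simp
  then show "fps_X dvd f" by (metis dvd_triv_left)
qed

lemma COND_iff:
  "(\<exists>p q. odd p \<and> odd q \<and> p < q \<and> q \<le> 2*r - 1
       \<and> \<not> fps_X dvd (b p + b (p+1))
       \<and> \<not> fps_X dvd (b q + b (q+1))
       \<and> \<not> fps_X dvd (b p + b (p+1) + b q + b (q+1))
       \<and> (\<forall>i. odd i \<and> p < i \<and> i < q \<longrightarrow> fps_X dvd (b i + b (i+1)))) \<longleftrightarrow> COND b r"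
proof
  assume "\<exists>p q. odd p \<and> odd q \<and> p < q \<and> q \<le> 2*r - 1
       \<and> \<not> fps_X dvd (b p + b (p+1))
       \<and> \<not> fps_X dvd (b q + b (q+1))
       \<and> \<not> fps_X dvd (b p + b (p+1) + b q + b (q+1))
       \<and> (\<forall>i. odd i \<and> p < i \<and> i < q \<longrightarrow> fps_X dvd (b i + b (i+1)))"
  then obtain p q where pq: "odd p" "odd q" "p < q" "q \<le> 2*r - 1"
      "\<not> fps_X dvd (b p + b (p+1))" "\<not> fps_X dvd (b q + b (q+1))"
      "\<not> fps_X dvd (b p + b (p+1) + b q + b (q+1))"
      "\<forall>i. odd i \<and> p < i \<and> i < q \<longrightarrow> fps_X dvd (b i + b (i+1))" by blast
  define l1 where "l1 = (p+1) div 2"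
  define l2 where "l2 = (q+1) div 2"
  have p: "p = 2*l1 - 1" "p + 1 = 2*l1" "l1 \<ge> 1" using pq(1) by (auto simp: l1_def elim!: oddE)
  have q: "q = 2*l2 - 1" "q + 1 = 2*l2" "l2 \<ge> 1" using pq(2) by (auto simp: l2_def elim!: oddE)
  have "l1 < l2" "l2 \<le> r" using p q pq(3,4) by auto
  moreover have "cc b l1 \<noteq> 0" using pq(5) p by (simp add: cc_def Xdvd)
  moreover have "cc b l2 \<noteq> 0" using pq(6) q by (simp add: cc_def Xdvd)
  moreover have "cc b l1 + cc b l2 \<noteq> 0" using pq(7) p q by (simp add: cc_def Xdvd add.assoc)
  moreover have "\<forall>l. l1 < l \<and> l < l2 \<longrightarrow> cc b l = 0"
  proof (intro allI impI)
    fix l assume l: "l1 < l \<and> l < l2"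
    have "odd (2*l-1)" "p < 2*l-1" "2*l-1 < q" "2*l-1+1 = 2*l" using l p q by auto
    then have "fps_X dvd (b (2*l-1) + b (2*l))" using pq(8) by metis
    then show "cc b l = 0" by (simp add: cc_def Xdvd)
  qed
  ultimately show "COND b r" unfolding COND_def using p(3) by blast
next
  assume "COND b r"
  then obtain l1 l2 where l: "1 \<le> l1" "l1 < l2" "l2 \<le> r" "cc b l1 \<noteq> 0" "cc b l2 \<noteq> 0" "cc b l1 + cc b l2 \<noteq> 0"
      "\<forall>l. l1 < l \<and> l < l2 \<longrightarrow> cc b l = 0" unfolding COND_def by blast
  define p where "p = 2*l1 - 1"
  define q where "q = 2*l2 - 1"
  have pp: "p + 1 = 2*l1" "odd p" using l(1) by (auto simp: p_def)
  have qq: "q + 1 = 2*l2" "odd q" using l(1,2) by (auto simp: q_def)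
  have "p < q" "q \<le> 2*r - 1" using l by (auto simp: p_def q_def)
  moreover have "\<not> fps_X dvd (b p + b (p+1))" using l(4) pp by (simp add: cc_def Xdvd p_def)
  moreover have "\<not> fps_X dvd (b q + b (q+1))" using l(5) qq by (simp add: cc_def Xdvd q_def)
  moreover have "\<not> fps_X dvd (b p + b (p+1) + b q + b (q+1))" using l(6) pp qq by (simp add: cc_def Xdvd p_def q_def add.assoc)
  moreover have "\<forall>i. odd i \<and> p < i \<and> i < q \<longrightarrow> fps_X dvd (b i + b (i+1))"
  proof (intro allI impI)
    fix i assume i: "odd i \<and> p < i \<and> i < q"
    define m where "m = (i+1) div 2"
    have m: "i = 2*m-1" "i+1 = 2*m" "l1 < m" "m < l2" using i pp qq by (auto simp: m_def p_def q_def elim!: oddE)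
    then have "cc b m = 0" using l(7) by blast
    then show "fps_X dvd (b i + b (i+1))" using m by (simp add: cc_def Xdvd)
  qed
  ultimately show "\<exists>p q. odd p \<and> odd q \<and> p < q \<and> q \<le> 2*r - 1
       \<and> \<not> fps_X dvd (b p + b (p+1))
       \<and> \<not> fps_X dvd (b q + b (q+1))
       \<and> \<not> fps_X dvd (b p + b (p+1) + b q + b (q+1))
       \<and> (\<forall>i. odd i \<and> p < i \<and> i < q \<longrightarrow> fps_X dvd (b i + b (i+1)))" using pp qq by blast
qed

lemma PP_const:
  assumes "\<forall>l. l1 < l \<and> l < l2 \<longrightarrow> cc b l = 0"
  shows "l1 \<le> j \<Longrightarrow> j < l2 \<Longrightarrow> PP b j = PP b l1"
proof (induction j)
  case 0 then show ?case by simp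
next
  case (Suc j)
  show ?case
  proof (cases "l1 = Suc j")
    case True then show ?thesis by simp
  next
    case False
    then have "l1 \<le> j" "l1 < Suc j" using Suc.prems by auto
    then show ?thesis using Suc assms PPSuc by simp
  qed
qed

lemma three_values:
  assumes "COND b r"
  shows "\<exists>j1 j2. 1 \<le> j1 \<and> j1 \<le> r \<and> 1 \<le> j2 \<and> j2 \<le> r \<and> PP b j1 \<noteq> 0 \<and> PP b j2 \<noteq> 0 \<and> PP b j1 \<noteq> PP b j2"
proof -
  obtain l1 l2 where l: "1 \<le> l1" "l1 < l2" "l2 \<le> r" "cc b l1 \<noteq> 0" "cc b l2 \<noteq> 0" "cc b l1 + cc b l2 \<noteq> 0"
      "\<forall>l. l1 < l \<and> l < l2 \<longrightarrow> cc b l = 0" using assms unfolding COND_def by blast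
  define A where "A = PP b (l1 - 1)"
  have e1: "Suc (l1 - 1) = l1" using l(1) by simp
  have B: "PP b l1 = A + cc b l1" using PPSuc[of b "l1 - 1"] unfolding e1 A_def .
  have e2: "Suc (l2 - 1) = l2" using l(1,2) by simp
  have l2p: "PP b (l2 - 1) = PP b l1" by (rule PP_const[OF l(7)]) (use l(2) in auto)
  have "PP b l2 = PP b (l2 - 1) + cc b l2" using PPSuc[of b "l2 - 1"] unfolding e2 .
  then have C: "PP b l2 = A + cc b l1 + cc b l2" using l2p B by simp
  have d1: "PP b l1 \<noteq> A" using B l(4) by simp
  have d2: "PP b l2 \<noteq> PP b l1" using B C l(5) by simp
  have d3: "PP b l2 \<noteq> A" using C l(6) by (simp add: add.assoc)
  have r1: "1 \<le> l1" "l1 \<le> r" "1 \<le> l2" "l2 \<le> r" using l by auto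
  show ?thesis
  proof (cases "A = 0")
    case True
    then have "PP b l1 \<noteq> 0" "PP b l2 \<noteq> 0" using d1 d3 by auto
    then show ?thesis using d2 r1 by metis
  next
    case False
    then have "l1 - 1 \<noteq> 0" using PP0 A_def by auto
    then have l11: "1 \<le> l1 - 1" "l1 - 1 \<le> r" using r1 by auto
    show ?thesis
    proof (cases "PP b l1 = 0")
      case True
      then have "PP b l2 \<noteq> 0" using d2 by simp
      then show ?thesis using False d3 r1 l11 unfolding A_def by metis
    next
      case nB: False
      then show ?thesis using False d1 r1 l11 unfolding A_def by metis
    qed
  qed
qed

lemma extend_vals:
  assumes eq: "PP b (Suc m) = PP b k" and k: "k \<le> m"
    and IH: "(\<forall>j\<le>m. PP b j = 0) \<or> (\<exists>\<beta>0. \<beta>0 \<noteq> 0 \<and> (\<forall>j\<le>m. PP b j \<in> {0, \<beta>0}))"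
  shows "(\<forall>j\<le>Suc m. PP b j = 0) \<or> (\<exists>\<beta>0. \<beta>0 \<noteq> 0 \<and> (\<forall>j\<le>Suc m. PP b j \<in> {0, \<beta>0}))"
  using IH
proof
  assume h: "\<forall>j\<le>m. PP b j = 0"
  have "\<forall>j\<le>Suc m. PP b j = 0"
  proof (intro allI impI)
    fix j assume "j \<le> Suc m"
    then consider "j \<le> m" | "j = Suc m" by linarith
    then show "PP b j = 0" using h eq k by cases auto
  qed
  then show ?thesis by blast
next
  assume "\<exists>\<beta>0. \<beta>0 \<noteq> 0 \<and> (\<forall>j\<le>m. PP b j \<in> {0, \<beta>0})"
  then obtain \<beta>0 where h: "\<beta>0 \<noteq> 0" "\<forall>j\<le>m. PP b j \<in> {0, \<beta>0}" by blast
  have "\<forall>j\<le>Suc m. PP b j \<in> {0, \<beta>0}"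
  proof (intro allI impI)
    fix j assume "j \<le> Suc m"
    then consider "j \<le> m" | "j = Suc m" by linarith
    then show "PP b j \<in> {0, \<beta>0}" using h eq k by cases auto
  qed
  then show ?thesis using h(1) by blast
qed

lemma two_values:
  assumes "\<not> COND b r"
  shows "\<exists>\<beta>0. \<beta>0 \<noteq> 0 \<and> (\<forall>j\<le>r. PP b j \<in> {0, \<beta>0})"
proof -
  have "m \<le> r \<Longrightarrow> (\<forall>j\<le>m. PP b j = 0) \<or> (\<exists>\<beta>0. \<beta>0 \<noteq> 0 \<and> (\<forall>j\<le>m. PP b j \<in> {0, \<beta>0}))" for m
  proof (induction m)
    case 0 then show ?case using PP0 by simp
  next
    case (Suc m)
    then have IH: "(\<forall>j\<le>m. PP b j = 0) \<or> (\<exists>\<beta>0. \<beta>0 \<noteq> 0 \<and> (\<forall>j\<le>m. PP b j \<in> {0, \<beta>0}))" by simp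
    show ?case
    proof (cases "cc b (Suc m) = 0")
      case True
      then have "PP b (Suc m) = PP b m" using PPSuc by simp
      then show ?thesis using IH extend_vals[of b m m] by simp
    next
      case cnz: False
      show ?thesis
      proof (cases "\<exists>l. 1 \<le> l \<and> l \<le> m \<and> cc b l \<noteq> 0")
        case False
        then have "\<forall>j\<le>m. PP b j = 0"
        proof -
          have "j \<le> m \<Longrightarrow> PP b j = 0" for j
            by (induction j) (use False PP0 PPSuc in auto)
          then show ?thesis by blast
        qed
        then have "PP b (Suc m) = cc b (Suc m)" using PPSuc by simp
        then have "\<forall>j\<le>Suc m. PP b j \<in> {0, cc b (Suc m)}" using \<open>\<forall>j\<le>m. PP b j = 0\<close> by (metis insertCI le_Suc_eq)
        then show ?thesis using cnz by blast
      next
        case True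
        define l1 where "l1 = (GREATEST l. 1 \<le> l \<and> l \<le> m \<and> cc b l \<noteq> 0)"
        have bnd: "\<forall>y. 1 \<le> y \<and> y \<le> m \<and> cc b y \<noteq> 0 \<longrightarrow> y \<le> m" by simp
        obtain k where k: "1 \<le> k \<and> k \<le> m \<and> cc b k \<noteq> 0" using True by blast
        have l1: "1 \<le> l1 \<and> l1 \<le> m \<and> cc b l1 \<noteq> 0" unfolding l1_def
          by (rule GreatestI_nat[where b=m and P="\<lambda>l. 1 \<le> l \<and> l \<le> m \<and> cc b l \<noteq> 0", OF k]) simp
        have l1max: "\<forall>l. l1 < l \<and> l \<le> m \<longrightarrow> cc b l = 0"
        proof (intro allI impI)
          fix l assume ll: "l1 < l \<and> l \<le> m"
          show "cc b l = 0"
          proof (rule ccontr)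
            assume "cc b l \<noteq> 0"
            then have "1 \<le> l \<and> l \<le> m \<and> cc b l \<noteq> 0" using ll l1 by auto
            then have "l \<le> l1" unfolding l1_def by (rule Greatest_le_nat[where b=m and P="\<lambda>l. 1 \<le> l \<and> l \<le> m \<and> cc b l \<noteq> 0"]) simp
            then show False using ll by simp
          qed
        qed
        have between: "\<forall>l. l1 < l \<and> l < Suc m \<longrightarrow> cc b l = 0" using l1max by auto
        have nc: "\<not> (1 \<le> l1 \<and> l1 < Suc m \<and> Suc m \<le> r \<and> cc b l1 \<noteq> 0 \<and> cc b (Suc m) \<noteq> 0 \<and> cc b l1 + cc b (Suc m) \<noteq> 0
            \<and> (\<forall>l. l1 < l \<and> l < Suc m \<longrightarrow> cc b l = 0))"
          using assms unfolding COND_def by blast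
        have "cc b l1 + cc b (Suc m) = 0"
          using nc l1 cnz between Suc.prems by auto
        have "PP b m = PP b l1" using PP_const[OF between, of m] l1 by simp
        moreover have "PP b l1 = PP b (l1 - 1) + cc b l1" using PPSuc[of b "l1 - 1"] l1 by simp
        ultimately have "PP b (Suc m) = PP b (l1 - 1) + (cc b l1 + cc b (Suc m))"
          using PPSuc[of b m] by (simp add: add.assoc)
        then have "PP b (Suc m) = PP b (l1 - 1)" using \<open>cc b l1 + cc b (Suc m) = 0\<close> by simp
        moreover have "l1 - 1 \<le> m" using l1 by linarith
        ultimately show ?thesis using IH extend_vals[of b m "l1 - 1"] by blast
      qed
    qed
  qed
  from this[of r] have "(\<forall>j\<le>r. PP b j = 0) \<or> (\<exists>\<beta>0. \<beta>0 \<noteq> 0 \<and> (\<forall>j\<le>r. PP b j \<in> {0, \<beta>0}))" by simp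
  then show ?thesis
  proof
    assume "\<forall>j\<le>r. PP b j = 0"
    then show ?thesis by (intro exI[of _ 1]) auto
  qed simp
qed



theorem theorem3p3:
  fixes n k r :: nat and I J :: "nat set" and ii jj :: "nat \<Rightarrow> nat"
    and b :: "nat \<Rightarrow> complex fps"
  assumes "n \<ge> 6" and "1 \<le> k" and "k \<le> n - 1"
    and "I \<subseteq> {1..n}" and "J \<subseteq> {1..n}" and "card I = k" and "card J = k"
    and "tightly_interlacing k I J r"
    and "I - J = ii ` {1..r}" and "J - I = jj ` {1..r}"
    and "\<forall>l\<in>{1..r}. 1 \<le> ii l \<and> ii l < jj l \<and> jj l \<le> n"
    and "\<forall>l\<in>{1..<r}. jj l < ii (Suc l)"
    and "(\<Sum>l=1..2*r. b l) = 0"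
  shows "indecomposable_rep n (MX I J r ii jj b) (MY I J r ii jj b) \<longleftrightarrow>
    (\<exists>p q. odd p \<and> odd q \<and> p < q \<and> q \<le> 2*r - 1
       \<and> \<not> fps_X dvd (b p + b (p+1))
       \<and> \<not> fps_X dvd (b q + b (q+1))
       \<and> \<not> fps_X dvd (b p + b (p+1) + b q + b (q+1))
       \<and> (\<forall>i. odd i \<and> p < i \<and> i < q \<longrightarrow> fps_X dvd (b i + b (i+1))))"
proof -
  note A11 = assms(11) and A12 = assms(12)
  define X where "X = MX I J r ii jj b"
  define Y where "Y = MY I J r ii jj b"
  define cnt where "cnt = cntf ii jj r"
  have n1: "n \<ge> 1" using assms(1) by simp
  have VC: "(i \<notin> sgf ii jj ` {1..2*r} \<and> cnt i = cnt (i-1)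
          \<and> (\<exists>c d. c \<noteq> 0 \<and> X i = (c,0,0,c) \<and> Y i = (d,0,0,d)))
       \<or> (\<exists>v\<in>{1..2*r}. i = sgf ii jj v \<and> cnt i = v \<and> cnt (i-1) = v - 1
          \<and> (odd v \<longrightarrow> X i = (fps_X, b v, 0, 1) \<and> Y i = (1, - b v, 0, fps_X))
          \<and> (even v \<longrightarrow> X i = (1, b v, 0, fps_X) \<and> Y i = (fps_X, - b v, 0, 1)))" if i: "i \<in> {1..n}" for i
    unfolding X_def Y_def cnt_def by (rule vertex_cases[OF A11 A12 i])
  have steps: "\<forall>i\<in>{1..n}. (cnt i = cnt (i-1) \<and> (\<exists>c. c \<noteq> 0 \<and> X i = (c,0,0,c)))
        \<or> (cnt i = Suc (cnt (i-1)) \<and> odd (cnt i) \<and> X i = (fps_X, b (cnt i), 0, 1))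
        \<or> (cnt i = Suc (cnt (i-1)) \<and> even (cnt i) \<and> X i = (1, b (cnt i), 0, fps_X))"
  proof
    fix i assume i: "i \<in> {1..n}"
    from VC[OF i] show "(cnt i = cnt (i-1) \<and> (\<exists>c. c \<noteq> 0 \<and> X i = (c,0,0,c)))
        \<or> (cnt i = Suc (cnt (i-1)) \<and> odd (cnt i) \<and> X i = (fps_X, b (cnt i), 0, 1))
        \<or> (cnt i = Suc (cnt (i-1)) \<and> even (cnt i) \<and> X i = (1, b (cnt i), 0, fps_X))"
    proof
      assume "\<exists>v\<in>{1..2*r}. i = sgf ii jj v \<and> cnt i = v \<and> cnt (i-1) = v - 1
          \<and> (odd v \<longrightarrow> X i = (fps_X, b v, 0, 1) \<and> Y i = (1, - b v, 0, fps_X))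
          \<and> (even v \<longrightarrow> X i = (1, b v, 0, fps_X) \<and> Y i = (fps_X, - b v, 0, 1))"
      then obtain v where v: "v \<in> {1..2*r}" "cnt i = v" "cnt (i-1) = v - 1"
          "odd v \<longrightarrow> X i = (fps_X, b v, 0, 1)" "even v \<longrightarrow> X i = (1, b v, 0, fps_X)" by blast
      then have "cnt i = Suc (cnt (i-1))" by simp
      then show ?thesis using v by (cases "odd v") auto
    qed blast
  qed
  have steps2: "\<forall>i\<in>{1..n}. (cnt i = cnt (i-1) \<and> (\<exists>c d. X i = (c,0,0,c) \<and> Y i = (d,0,0,d)))
        \<or> (cnt i = Suc (cnt (i-1)) \<and> odd (cnt i) \<and> X i = (fps_X, b (cnt i), 0, 1) \<and> Y i = (1, - b (cnt i), 0, fps_X))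
        \<or> (cnt i = Suc (cnt (i-1)) \<and> even (cnt i) \<and> X i = (1, b (cnt i), 0, fps_X) \<and> Y i = (fps_X, - b (cnt i), 0, 1))"
  proof
    fix i assume i: "i \<in> {1..n}"
    from VC[OF i] show "(cnt i = cnt (i-1) \<and> (\<exists>c d. X i = (c,0,0,c) \<and> Y i = (d,0,0,d)))
        \<or> (cnt i = Suc (cnt (i-1)) \<and> odd (cnt i) \<and> X i = (fps_X, b (cnt i), 0, 1) \<and> Y i = (1, - b (cnt i), 0, fps_X))
        \<or> (cnt i = Suc (cnt (i-1)) \<and> even (cnt i) \<and> X i = (1, b (cnt i), 0, fps_X) \<and> Y i = (fps_X, - b (cnt i), 0, 1))"
    proof
      assume "\<exists>v\<in>{1..2*r}. i = sgf ii jj v \<and> cnt i = v \<and> cnt (i-1) = v - 1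
          \<and> (odd v \<longrightarrow> X i = (fps_X, b v, 0, 1) \<and> Y i = (1, - b v, 0, fps_X))
          \<and> (even v \<longrightarrow> X i = (1, b v, 0, fps_X) \<and> Y i = (fps_X, - b v, 0, 1))"
      then obtain v where v: "v \<in> {1..2*r}" "cnt i = v" "cnt (i-1) = v - 1"
          "odd v \<longrightarrow> X i = (fps_X, b v, 0, 1) \<and> Y i = (1, - b v, 0, fps_X)"
          "even v \<longrightarrow> X i = (1, b v, 0, fps_X) \<and> Y i = (fps_X, - b v, 0, 1)" by blast
      then have "cnt i = Suc (cnt (i-1))" by simp
      then show ?thesis using v by (cases "odd v") auto
    qed blast
  qed
  have c0: "cnt 0 = 0" unfolding cnt_def by (rule cnt0[OF A11 A12])
  have cn: "cnt n = 2*r" unfolding cnt_def by (rule cntn[OF A11 A12])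
  have psn: "ps b (cnt n) = 0" using cn assms(13) by (simp add: ps_def)
  have cle: "cnt i \<le> 2*r" for i
  proof -
    have "cnt i \<le> card {1..2*r}" unfolding cnt_def cntf_def by (rule card_mono) auto
    then show ?thesis by simp
  qed
  show ?thesis
    unfolding COND_iff X_def[symmetric] Y_def[symmetric]
  proof
    assume indec: "indecomposable_rep n X Y"
    show "COND b r"
    proof (rule ccontr)
      assume "\<not> COND b r"
      then obtain \<beta>0 where b0: "\<beta>0 \<noteq> 0" "\<forall>j\<le>r. PP b j \<in> {0, \<beta>0}" using two_values by blast
      have vals: "\<forall>i\<in>{1..n}. even (cnt i) \<longrightarrow> ps b (cnt i) $ 0 \<in> {0, \<beta>0}"
      proof (intro ballI impI)
        fix i assume "i \<in> {1..n}" "even (cnt i)"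
        then obtain j where j: "cnt i = 2*j" by (auto elim!: evenE)
        then have "j \<le> r" using cle[of i] by simp
        then show "ps b (cnt i) $ 0 \<in> {0, \<beta>0}" using b0 j by (simp add: PP_def)
      qed
      have "decomposable_rep n X Y"
        by (rule decomp_construct[OF n1 steps2 c0 _ psn b0(1) vals]) (simp add: cn)
      then show False using indec unfolding indecomposable_rep_def by blast
    qed
  next
    assume cond: "COND b r"
    show "indecomposable_rep n X Y"
      unfolding indecomposable_rep_def
    proof (intro conjI notI)
      show "1 \<le> n" using n1 .
    next
      assume "decomposable_rep n X Y"
      then obtain W W' where WW: "subrep n X Y W" "subrep n X Y W'"
        "\<forall>i\<in>{1..n}. W i \<inter> W' i = {0} \<and> (\<forall>v. \<exists>a\<in>W i. \<exists>c\<in>W' i. v = a + c)"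
        "\<exists>i\<in>{1..n}. W i \<noteq> {0}" "\<exists>i\<in>{1..n}. W' i \<noteq> {0}" unfolding decomposable_rep_def by blast
      obtain E where E: "\<forall>i\<in>{1..n}. \<forall>w. mapply (E i) (mapply (E i) w) = mapply (E i) w"
        "\<forall>i\<in>{1..n}. \<forall>w. mapply (X i) (mapply (E (cprev n i)) w) = mapply (E i) (mapply (X i) w)"
        "\<exists>i\<in>{1..n}. E i \<noteq> (0,0,0,0)" "\<exists>i\<in>{1..n}. E i \<noteq> (1,0,0,1)"
        using decomp_to_E[OF n1 WW] by blast
      define F where "F i = E (if i = 0 then n else i)" for i
      have rel: "\<forall>i\<in>{1..n}. \<forall>w. mapply (X i) (mapply (F (i-1)) w) = mapply (F i) (mapply (X i) w)"
      proof (intro ballI allI)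
        fix i w assume i: "i \<in> {1..n}"
        have "F (i-1) = E (cprev n i)" "F i = E i" using i by (auto simp: F_def cprev_def)
        moreover have "mapply (X i) (mapply (E (cprev n i)) w) = mapply (E i) (mapply (X i) w)" using E(2) i by blast
        ultimately show "mapply (X i) (mapply (F (i-1)) w) = mapply (F i) (mapply (X i) w)" by simp
      qed
      have idem0: "\<forall>w. mapply (F 0) (mapply (F 0) w) = mapply (F 0) w"
        using E(1) n1 by (simp add: F_def)
      interpret ch: chainloc n cnt X b using c0 steps by unfold_locales
      obtain j1 j2 where j: "1 \<le> j1" "j1 \<le> r" "1 \<le> j2" "j2 \<le> r" "PP b j1 \<noteq> 0" "PP b j2 \<noteq> 0" "PP b j1 \<noteq> PP b j2"
        using three_values[OF cond] by blast
      define i1 where "i1 = sgf ii jj (2*j1)"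
      define i2 where "i2 = sgf ii jj (2*j2)"
      have m1: "2*j1 \<in> {1..2*r}" "2*j2 \<in> {1..2*r}" using j by auto
      have ci: "cnt i1 = 2*j1" "cnt i2 = 2*j2" unfolding cnt_def i1_def i2_def using cnt_sg[OF A11 A12] m1 by auto
      have ir: "i1 \<le> n" "i2 \<le> n" unfolding i1_def i2_def using sg_range[OF A11 A12] m1 by auto
      have "(\<forall>i\<le>n. F i = (0,0,0,0)) \<or> (\<forall>i\<le>n. F i = (1,0,0,1))"
        by (rule ch.core[OF rel idem0 ir(1) ir(2)]) (use ci j in \<open>auto simp: PP_def\<close>)
      moreover have "\<forall>i\<in>{1..n}. F i = E i" by (auto simp: F_def)
      ultimately show False using E(3) E(4) by fastforce
    qed
  qed
qed


end
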